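(* Let $u(x)=\sum_\alpha u_\alpha(x)\mathfrak{N}_\alpha$ with real-valued $u_\alpha\in L_2(U,\mu)$, only finitely many nonzero, and let $v=\sum_\alpha v_\alpha\mathfrak{N}_\alpha$ with real $v_\alpha$, only finitely many nonzero. Then $$\mathbf{E}[\delta(u)v]=\mathbf{E}\Big[\int_U u(x)\mathbb{D}v(x)d\mu\Big].$$
   Context: Setting: $(U,\mathcal{U},\mu)$ $\sigma$-finite complete measure space, $\{m_k\}$ a complete orthonormal system of $L_2(U,\mu)$; $\mathfrak{N}:L_2(U,\mu)\to L_2(\Omega,\mathbf{P})$ mean-zero linear isometry, $\xi_k=\mathfrak{N}(m_k)$. $J$: finitely supported multi-indices of nonnegative integers, $\alpha!=\prod\alpha_k!$, $\varepsilon_k$ unit multi-indices; $\{\mathfrak{N}_\alpha\}$ an orthogonal family in $L_2(\Omega)$ with $\mathbf{E}\mathfrak{N}_\alpha^2=\alpha!$, obtained by degreewise orthogonalization of monomials $\prod\xi_k^{\alpha_k}$. Skorokhod integral: $\delta(u)=\sum_\alpha\sum_k(\int_U u_\alpha m_kd\mu)\mathfrak{N}_{\alpha+\varepsilon_k}$. Malliavin derivative: $\mathbb{D}v(x)=\sum_\alpha\sum_k(\alpha_k+1)v_{\alpha+\varepsilon_k}m_k(x)\mathfrak{N}_\alpha$. *)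

theory Defs
  imports "HOL-Probability.Probability"
begin

definition multi_idx :: "(nat \<Rightarrow> nat) set" where
  "multi_idx = {\<alpha>. finite {k. \<alpha> k \<noteq> 0}}"

definition mfact :: "(nat \<Rightarrow> nat) \<Rightarrow> real" where
  "mfact \<alpha> = (\<Prod>k\<in>{k. \<alpha> k \<noteq> 0}. fact (\<alpha> k))"

definition add_unit :: "(nat \<Rightarrow> nat) \<Rightarrow> nat \<Rightarrow> (nat \<Rightarrow> nat)" where
  "add_unit \<alpha> k = \<alpha>(k := \<alpha> k + 1)"

definition L2 :: "'a measure \<Rightarrow> ('a \<Rightarrow> real) set" where
  "L2 M = {f. f \<in> borel_measurable M \<and> integrable M (\<lambda>x. (f x)\<^sup>2)}"

definition chaos_field ::
  "((nat \<Rightarrow> nat) \<Rightarrow> 'w \<Rightarrow> real) \<Rightarrow> ((nat \<Rightarrow> nat) \<Rightarrow> 'u \<Rightarrow> real) \<Rightarrow> 'u \<Rightarrow> 'w \<Rightarrow> real" where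
  "chaos_field N u x \<omega> = (\<Sum>\<alpha> | \<alpha> \<in> multi_idx \<and> u \<alpha> \<noteq> (\<lambda>_. 0). u \<alpha> x * N \<alpha> \<omega>)"

definition chaos_rv ::
  "((nat \<Rightarrow> nat) \<Rightarrow> 'w \<Rightarrow> real) \<Rightarrow> ((nat \<Rightarrow> nat) \<Rightarrow> real) \<Rightarrow> 'w \<Rightarrow> real" where
  "chaos_rv N v \<omega> = (\<Sum>\<alpha> | \<alpha> \<in> multi_idx \<and> v \<alpha> \<noteq> 0. v \<alpha> * N \<alpha> \<omega>)"

definition skorokhod_partial ::
  "'u measure \<Rightarrow> (nat \<Rightarrow> 'u \<Rightarrow> real) \<Rightarrow> ((nat \<Rightarrow> nat) \<Rightarrow> 'w \<Rightarrow> real) \<Rightarrow>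
   ((nat \<Rightarrow> nat) \<Rightarrow> 'u \<Rightarrow> real) \<Rightarrow> nat \<Rightarrow> 'w \<Rightarrow> real" where
  "skorokhod_partial M m N u n \<omega> =
     (\<Sum>\<alpha> | \<alpha> \<in> multi_idx \<and> u \<alpha> \<noteq> (\<lambda>_. 0).
        \<Sum>k<n. (\<integral>x. u \<alpha> x * m k x \<partial>M) * N (add_unit \<alpha> k) \<omega>)"

definition skorokhod ::
  "'u measure \<Rightarrow> 'w measure \<Rightarrow> (nat \<Rightarrow> 'u \<Rightarrow> real) \<Rightarrow> ((nat \<Rightarrow> nat) \<Rightarrow> 'w \<Rightarrow> real) \<Rightarrow>
   ((nat \<Rightarrow> nat) \<Rightarrow> 'u \<Rightarrow> real) \<Rightarrow> 'w \<Rightarrow> real" where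
  "skorokhod M P m N u = (SOME Y. Y \<in> L2 P \<and>
     (\<lambda>n. \<integral>\<omega>. (Y \<omega> - skorokhod_partial M m N u n \<omega>)\<^sup>2 \<partial>P) \<longlonglongrightarrow> 0)"

text \<open>Malliavin derivative Dv(x) = sum_alpha sum_k (alpha_k+1) v_(alpha+eps_k) m_k(x) N_alpha;
  only the finitely many pairs (alpha,k) with v_(alpha+eps_k) nonzero contribute.\<close>
definition malliavin ::
  "(nat \<Rightarrow> 'u \<Rightarrow> real) \<Rightarrow> ((nat \<Rightarrow> nat) \<Rightarrow> 'w \<Rightarrow> real) \<Rightarrow> ((nat \<Rightarrow> nat) \<Rightarrow> real) \<Rightarrow> 'u \<Rightarrow> 'w \<Rightarrow> real" where
  "malliavin m N v x \<omega> =
     (\<Sum>(\<alpha>, k) | \<alpha> \<in> multi_idx \<and> v (add_unit \<alpha> k) \<noteq> 0.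
        real (\<alpha> k + 1) * v (add_unit \<alpha> k) * m k x * N \<alpha> \<omega>)"

end

theory Submission
  imports Defs
begin

lemma abs_le_sq_bound:
  fixes h t :: real assumes t: "t > 0"
  shows "\<bar>h\<bar> \<le> (t * h\<^sup>2 + 1 / t) / 2"
proof -
  have "0 \<le> (t * \<bar>h\<bar> - 1)\<^sup>2" by simp
  hence "2 * t * \<bar>h\<bar> \<le> t\<^sup>2 * h\<^sup>2 + 1" by (simp add: power2_eq_square algebra_simps)
  hence "\<bar>h\<bar> \<le> (t\<^sup>2 * h\<^sup>2 + 1) / (2 * t)" using t by (simp add: pos_le_divide_eq algebra_simps)
  also have "(t\<^sup>2 * h\<^sup>2 + 1) / (2 * t) = (t * h\<^sup>2 + 1 / t) / 2" using t by (simp add: field_simps power2_eq_square)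
  finally show ?thesis .
qed

lemma integrable_prod_L2:
  fixes a b :: "'w \<Rightarrow> real"
  assumes [measurable]: "a \<in> borel_measurable P" "b \<in> borel_measurable P"
    and ia: "integrable P (\<lambda>x. (a x)\<^sup>2)" and ib: "integrable P (\<lambda>x. (b x)\<^sup>2)"
  shows "integrable P (\<lambda>x. a x * b x)"
proof (rule Bochner_Integration.integrable_bound[where f="\<lambda>x. (a x)\<^sup>2 + (b x)\<^sup>2"])
  show "integrable P (\<lambda>x. (a x)\<^sup>2 + (b x)\<^sup>2)" using ia ib by simp
  show "(\<lambda>x. a x * b x) \<in> borel_measurable P" by measurable
  show "AE x in P. norm (a x * b x) \<le> norm ((a x)\<^sup>2 + (b x)\<^sup>2)"
  proof (rule AE_I2)
    fix x
    have "0 \<le> (\<bar>a x\<bar> - \<bar>b x\<bar>)\<^sup>2" by simp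
    hence "2 * \<bar>a x\<bar> * \<bar>b x\<bar> \<le> (a x)\<^sup>2 + (b x)\<^sup>2"
      by (simp add: power2_eq_square algebra_simps)
    moreover have "\<bar>a x\<bar> * \<bar>b x\<bar> \<ge> 0" by simp
    ultimately have "\<bar>a x\<bar> * \<bar>b x\<bar> \<le> (a x)\<^sup>2 + (b x)\<^sup>2" by linarith
    thus "norm (a x * b x) \<le> norm ((a x)\<^sup>2 + (b x)\<^sup>2)"
      by (simp add: abs_mult)
  qed
qed

lemma integrable_sq_diff:
  fixes a b :: "'w \<Rightarrow> real"
  assumes [measurable]: "a \<in> borel_measurable P" "b \<in> borel_measurable P"
    and ia: "integrable P (\<lambda>x. (a x)\<^sup>2)" and ib: "integrable P (\<lambda>x. (b x)\<^sup>2)"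
  shows "integrable P (\<lambda>x. (a x - b x)\<^sup>2)"
proof -
  have "integrable P (\<lambda>x. (a x)\<^sup>2 - 2 * (a x * b x) + (b x)\<^sup>2)"
    using integrable_prod_L2[OF assms] ia ib by simp
  moreover have "(\<lambda>x. (a x - b x)\<^sup>2) = (\<lambda>x. (a x)\<^sup>2 - 2 * (a x * b x) + (b x)\<^sup>2)" by (simp add: power2_diff algebra_simps)
  ultimately show ?thesis by simp
qed

lemma integrable_sq_add:
  fixes a b :: "'w \<Rightarrow> real"
  assumes [measurable]: "a \<in> borel_measurable P" "b \<in> borel_measurable P"
    and ia: "integrable P (\<lambda>x. (a x)\<^sup>2)" and ib: "integrable P (\<lambda>x. (b x)\<^sup>2)"
  shows "integrable P (\<lambda>x. (a x + b x)\<^sup>2)"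
proof -
  have "integrable P (\<lambda>x. (a x)\<^sup>2 + 2 * (a x * b x) + (b x)\<^sup>2)"
    using integrable_prod_L2[OF assms] ia ib by simp
  moreover have "(\<lambda>x. (a x + b x)\<^sup>2) = (\<lambda>x. (a x)\<^sup>2 + 2 * (a x * b x) + (b x)\<^sup>2)" by (simp add: power2_sum algebra_simps)
  ultimately show ?thesis by simp
qed

lemma int_abs_bound:
  fixes h :: "'w \<Rightarrow> real"
  assumes P: "prob_space P" and [measurable]: "h \<in> borel_measurable P"
    and ih: "integrable P (\<lambda>x. (h x)\<^sup>2)" and t: "t > 0"
  shows "integrable P (\<lambda>x. \<bar>h x\<bar>)" "(\<integral>x. \<bar>h x\<bar> \<partial>P) \<le> (t * (\<integral>x. (h x)\<^sup>2 \<partial>P) + 1 / t) / 2"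
proof -
  interpret prob_space P by fact
  have i2: "integrable P (\<lambda>x. (t * (h x)\<^sup>2 + 1 / t) / 2)" using ih by simp
  show ia: "integrable P (\<lambda>x. \<bar>h x\<bar>)"
  proof (rule Bochner_Integration.integrable_bound[OF i2])
    show "AE x in P. norm \<bar>h x\<bar> \<le> norm ((t * (h x)\<^sup>2 + 1 / t) / 2)"
    proof (rule AE_I2)
      fix x
      have b: "\<bar>h x\<bar> \<le> (t * (h x)\<^sup>2 + 1 / t) / 2" by (rule abs_le_sq_bound[OF t])
      hence "0 \<le> (t * (h x)\<^sup>2 + 1 / t) / 2" by linarith
      with b show "norm \<bar>h x\<bar> \<le> norm ((t * (h x)\<^sup>2 + 1 / t) / 2)" by simp
    qed
  qed simp
  have "(\<integral>x. \<bar>h x\<bar> \<partial>P) \<le> (\<integral>x. (t * (h x)\<^sup>2 + 1 / t) / 2 \<partial>P)"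
    by (rule integral_mono[OF ia i2]) (rule abs_le_sq_bound[OF t])
  also have "\<dots> = (t * (\<integral>x. (h x)\<^sup>2 \<partial>P) + 1 / t) / 2"
    using ih prob_space by simp
  finally show "(\<integral>x. \<bar>h x\<bar> \<partial>P) \<le> (t * (\<integral>x. (h x)\<^sup>2 \<partial>P) + 1 / t) / 2" .
qed

lemma L2_cauchy_limit:
  fixes f :: "nat \<Rightarrow> 'w \<Rightarrow> real"
  assumes P: "prob_space P" and fm[measurable]: "\<And>n. f n \<in> borel_measurable P"
    and fi: "\<And>n. integrable P (\<lambda>\<omega>. (f n \<omega>)\<^sup>2)"
    and C: "\<And>e. e > 0 \<Longrightarrow> \<exists>N. \<forall>n\<ge>N. \<forall>p\<ge>N. (\<integral>\<omega>. (f p \<omega> - f n \<omega>)\<^sup>2 \<partial>P) < e"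
  shows "\<exists>Y. Y \<in> L2 P \<and> (\<lambda>n. \<integral>\<omega>. (Y \<omega> - f n \<omega>)\<^sup>2 \<partial>P) \<longlonglongrightarrow> 0"
proof -
  interpret prob_space P by fact
  have "\<forall>j. \<exists>N. \<forall>n\<ge>N. \<forall>p\<ge>N. (\<integral>\<omega>. (f p \<omega> - f n \<omega>)\<^sup>2 \<partial>P) < (1/4)^j"
    using C by simp
  then obtain R where R: "\<And>j n p. n \<ge> R j \<Longrightarrow> p \<ge> R j \<Longrightarrow> (\<integral>\<omega>. (f p \<omega> - f n \<omega>)\<^sup>2 \<partial>P) < (1/4)^j"
    by metis
  define r where "r = rec_nat (R 0) (\<lambda>j rj. max (R (Suc j)) (Suc rj))"
  have r0: "r 0 = R 0" and rS: "\<And>j. r (Suc j) = max (R (Suc j)) (Suc (r j))"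
    by (simp_all add: r_def)
  have rR: "R j \<le> r j" for j by (cases j) (simp_all add: r0 rS)
  have rmono: "r j \<le> r i" if "j \<le> i" for i j
    using that by (induction i) (auto simp: rS le_Suc_eq)
  have fi2: "integrable P (\<lambda>\<omega>. (f p \<omega> - f n \<omega>)\<^sup>2)" for p n
    by (rule integrable_sq_diff) (simp_all add: fi)
  define g where "g j \<omega> = \<bar>f (r (Suc j)) \<omega> - f (r j) \<omega>\<bar>" for j \<omega>
  have gm[measurable]: "g j \<in> borel_measurable P" for j unfolding g_def by measurable
  have gi: "integrable P (g j)" for j
    unfolding g_def by (rule int_abs_bound(1)[where t=1 and h="\<lambda>\<omega>. f (r (Suc j)) \<omega> - f (r j) \<omega>", OF P _ fi2]) auto
  have gb: "(\<integral>\<omega>. g j \<omega> \<partial>P) \<le> (1/2)^j" for j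
  proof -
    have t: "(2::real)^j > 0" by simp
    have h: "(\<integral>\<omega>. (f (r (Suc j)) \<omega> - f (r j) \<omega>)\<^sup>2 \<partial>P) < (1/4)^j"
      using R[of j "r j" "r (Suc j)"] rR[of j] rmono[of j "Suc j"] by auto
    have "(\<integral>\<omega>. g j \<omega> \<partial>P) \<le> (2^j * (\<integral>\<omega>. (f (r (Suc j)) \<omega> - f (r j) \<omega>)\<^sup>2 \<partial>P) + 1 / 2^j) / 2"
      unfolding g_def by (rule int_abs_bound(2)[where h="\<lambda>\<omega>. f (r (Suc j)) \<omega> - f (r j) \<omega>", OF P _ fi2 t]) auto
    also have "\<dots> \<le> (2^j * (1/4)^j + 1 / 2^j) / 2"
      using h by (intro divide_right_mono add_right_mono mult_left_mono) auto
    also have "2^j * (1/4::real)^j = (1/2)^j"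
      by (simp add: power_divide power_mult_distrib[symmetric] field_simps)
    also have "((1/2::real)^j + 1 / 2^j) / 2 \<le> (1/2)^j" by (simp add: power_divide)
    finally show ?thesis .
  qed
  have gn: "0 \<le> g j \<omega>" for j \<omega> by (simp add: g_def)
  have sg: "summable (\<lambda>j. \<integral>\<omega>. g j \<omega> \<partial>P)"
    by (rule summable_comparison_test[OF _ summable_geometric[of "1/2"]])
       (auto intro!: exI[of _ 0] simp: gb integral_nonneg_AE gn)
  have "(\<integral>\<^sup>+\<omega>. (\<Sum>j. ennreal (g j \<omega>)) \<partial>P) = (\<Sum>j. \<integral>\<^sup>+\<omega>. ennreal (g j \<omega>) \<partial>P)"
    by (rule nn_integral_suminf) measurable
  also have "\<dots> = (\<Sum>j. ennreal (\<integral>\<omega>. g j \<omega> \<partial>P))"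
    by (intro suminf_cong nn_integral_eq_integral gi) (simp add: gn)
  also have "\<dots> \<noteq> \<top>"
    by (rule ennreal_suminf_neq_top[OF sg]) (simp add: integral_nonneg_AE gn)
  finally have "AE \<omega> in P. (\<Sum>j. ennreal (g j \<omega>)) \<noteq> \<top>"
  proof -
    assume a: "(\<integral>\<^sup>+\<omega>. (\<Sum>j. ennreal (g j \<omega>)) \<partial>P) \<noteq> \<top>"
    have "(\<lambda>\<omega>. \<Sum>j. ennreal (g j \<omega>)) \<in> borel_measurable P" by measurable
    from nn_integral_PInf_AE[OF this] a show ?thesis by (simp add: infinity_ennreal_def)
  qed
  hence AEs: "AE \<omega> in P. summable (\<lambda>j. g j \<omega>)"
    by (rule AE_mp) (auto intro!: AE_I2 summable_suminf_not_top gn)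
  have AEc: "AE \<omega> in P. convergent (\<lambda>j. f (r j) \<omega>)"
  proof (rule AE_mp[OF AEs], rule AE_I2, rule impI)
    fix \<omega> assume s: "summable (\<lambda>j. g j \<omega>)"
    hence "summable (\<lambda>j. f (r (Suc j)) \<omega> - f (r j) \<omega>)"
      unfolding g_def by (rule summable_rabs_cancel)
    hence "(\<lambda>n. \<Sum>j<n. f (r (Suc j)) \<omega> - f (r j) \<omega>) \<longlonglongrightarrow> (\<Sum>j. f (r (Suc j)) \<omega> - f (r j) \<omega>)"
      by (rule summable_LIMSEQ)
    hence "(\<lambda>n. f (r 0) \<omega> + (\<Sum>j<n. f (r (Suc j)) \<omega> - f (r j) \<omega>)) \<longlonglongrightarrow> f (r 0) \<omega> + (\<Sum>j. f (r (Suc j)) \<omega> - f (r j) \<omega>)"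
      by (intro tendsto_intros)
    moreover have "f (r 0) \<omega> + (\<Sum>j<n. f (r (Suc j)) \<omega> - f (r j) \<omega>) = f (r n) \<omega>" for n
      by (induction n) auto
    ultimately show "convergent (\<lambda>j. f (r j) \<omega>)" unfolding convergent_def by auto
  qed
  define Y where "Y \<omega> = lim (\<lambda>j. f (r j) \<omega>)" for \<omega>
  have Ym[measurable]: "Y \<in> borel_measurable P" unfolding Y_def by measurable
  have AEl: "AE \<omega> in P. (\<lambda>j. f (r j) \<omega>) \<longlonglongrightarrow> Y \<omega>"
    using AEc by (rule AE_mp) (auto intro!: AE_I2 simp: Y_def convergent_LIMSEQ_iff)
  have key: "integrable P (\<lambda>\<omega>. (Y \<omega> - f n \<omega>)\<^sup>2) \<and> (\<integral>\<omega>. (Y \<omega> - f n \<omega>)\<^sup>2 \<partial>P) \<le> (1/4)^J"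
    if nJ: "n \<ge> r J" for n J
  proof -
    have "(\<integral>\<^sup>+\<omega>. ennreal ((Y \<omega> - f n \<omega>)\<^sup>2) \<partial>P) = (\<integral>\<^sup>+\<omega>. liminf (\<lambda>j. ennreal ((f (r j) \<omega> - f n \<omega>)\<^sup>2)) \<partial>P)"
    proof (rule nn_integral_cong_AE, rule AE_mp[OF AEl], rule AE_I2, rule impI)
      fix \<omega> assume l: "(\<lambda>j. f (r j) \<omega>) \<longlonglongrightarrow> Y \<omega>"
      have "(\<lambda>j. ennreal ((f (r j) \<omega> - f n \<omega>)\<^sup>2)) \<longlonglongrightarrow> ennreal ((Y \<omega> - f n \<omega>)\<^sup>2)"
        by (intro tendsto_intros l)
      thus "ennreal ((Y \<omega> - f n \<omega>)\<^sup>2) = liminf (\<lambda>j. ennreal ((f (r j) \<omega> - f n \<omega>)\<^sup>2))"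
        by (intro lim_imp_Liminf[symmetric]) auto
    qed
    also have "\<dots> \<le> liminf (\<lambda>j. \<integral>\<^sup>+\<omega>. ennreal ((f (r j) \<omega> - f n \<omega>)\<^sup>2) \<partial>P)"
      by (rule nn_integral_liminf) measurable
    also have "\<dots> \<le> ennreal ((1/4)^J)"
    proof (rule Liminf_le)
      show "sequentially \<noteq> bot" by simp
      show "\<forall>\<^sub>F j in sequentially. (\<integral>\<^sup>+\<omega>. ennreal ((f (r j) \<omega> - f n \<omega>)\<^sup>2) \<partial>P) \<le> ennreal ((1/4)^J)"
      proof (rule eventually_sequentiallyI[of J])
        fix j assume "J \<le> j"
        hence "r j \<ge> R J" using rmono[of J j] rR[of J] by simp
        hence "(\<integral>\<omega>. (f (r j) \<omega> - f n \<omega>)\<^sup>2 \<partial>P) < (1/4)^J"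
          using R[of J n "r j"] nJ rR[of J] by simp
        moreover have "(\<integral>\<^sup>+\<omega>. ennreal ((f (r j) \<omega> - f n \<omega>)\<^sup>2) \<partial>P) = ennreal (\<integral>\<omega>. (f (r j) \<omega> - f n \<omega>)\<^sup>2 \<partial>P)"
          by (rule nn_integral_eq_integral[OF fi2]) simp
        ultimately show "(\<integral>\<^sup>+\<omega>. ennreal ((f (r j) \<omega> - f n \<omega>)\<^sup>2) \<partial>P) \<le> ennreal ((1/4)^J)"
          by (simp add: ennreal_leI)
      qed
    qed
    finally have b: "(\<integral>\<^sup>+\<omega>. ennreal ((Y \<omega> - f n \<omega>)\<^sup>2) \<partial>P) \<le> ennreal ((1/4)^J)" .
    have i: "integrable P (\<lambda>\<omega>. (Y \<omega> - f n \<omega>)\<^sup>2)"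
    proof (rule integrableI_bounded)
      show "(\<lambda>\<omega>. (Y \<omega> - f n \<omega>)\<^sup>2) \<in> borel_measurable P" by measurable
      show "(\<integral>\<^sup>+\<omega>. ennreal (norm ((Y \<omega> - f n \<omega>)\<^sup>2)) \<partial>P) < \<infinity>"
        using b by (simp add: order.strict_trans1)
    qed
    have "ennreal (\<integral>\<omega>. (Y \<omega> - f n \<omega>)\<^sup>2 \<partial>P) = (\<integral>\<^sup>+\<omega>. ennreal ((Y \<omega> - f n \<omega>)\<^sup>2) \<partial>P)"
      by (rule nn_integral_eq_integral[OF i, symmetric]) simp
    with b have "ennreal (\<integral>\<omega>. (Y \<omega> - f n \<omega>)\<^sup>2 \<partial>P) \<le> ennreal ((1/4)^J)" by simp
    hence "(\<integral>\<omega>. (Y \<omega> - f n \<omega>)\<^sup>2 \<partial>P) \<le> (1/4)^J"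
      by (simp add: ennreal_le_iff)
    with i show ?thesis by simp
  qed
  have YL2: "Y \<in> L2 P"
  proof -
    have "integrable P (\<lambda>\<omega>. ((Y \<omega> - f (r 0) \<omega>) + f (r 0) \<omega>)\<^sup>2)"
      by (rule integrable_sq_add) (use key[OF order_refl, of 0] fi in auto)
    thus ?thesis by (simp add: L2_def)
  qed
  have "(\<lambda>n. \<integral>\<omega>. (Y \<omega> - f n \<omega>)\<^sup>2 \<partial>P) \<longlonglongrightarrow> 0"
  proof (rule LIMSEQ_I)
    fix e :: real assume e: "0 < e"
    obtain J where J: "(1/4::real)^J < e" using real_arch_pow_inv[OF e, of "1/4"] by auto
    show "\<exists>no. \<forall>n\<ge>no. norm ((\<integral>\<omega>. (Y \<omega> - f n \<omega>)\<^sup>2 \<partial>P) - 0) < e"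
    proof (intro exI allI impI)
      fix n assume "r J \<le> n"
      from key[OF this] J show "norm ((\<integral>\<omega>. (Y \<omega> - f n \<omega>)\<^sup>2 \<partial>P) - 0) < e"
        by (simp add: integral_nonneg_AE)
    qed
  qed
  with YL2 show ?thesis by blast
qed

lemma prod_le_sq_bound:
  fixes a b t :: real assumes t: "t > 0"
  shows "\<bar>a * b\<bar> \<le> (t * a\<^sup>2 + b\<^sup>2 / t) / 2"
proof -
  have "0 \<le> (t * \<bar>a\<bar> - \<bar>b\<bar>)\<^sup>2" by simp
  hence "2 * t * \<bar>a * b\<bar> \<le> t\<^sup>2 * a\<^sup>2 + b\<^sup>2" by (simp add: power2_eq_square algebra_simps abs_mult)
  hence "\<bar>a * b\<bar> \<le> (t\<^sup>2 * a\<^sup>2 + b\<^sup>2) / (2 * t)" using t by (simp add: pos_le_divide_eq algebra_simps)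
  also have "(t\<^sup>2 * a\<^sup>2 + b\<^sup>2) / (2 * t) = (t * a\<^sup>2 + b\<^sup>2 / t) / 2" using t by (simp add: field_simps power2_eq_square)
  finally show ?thesis .
qed

lemma L2_lim_inner:
  fixes Y V :: "'w \<Rightarrow> real" and S :: "nat \<Rightarrow> 'w \<Rightarrow> real"
  assumes P: "prob_space P" and Y: "Y \<in> L2 P" and V: "V \<in> L2 P" and S: "\<And>n. S n \<in> L2 P"
    and lim: "(\<lambda>n. \<integral>\<omega>. (Y \<omega> - S n \<omega>)\<^sup>2 \<partial>P) \<longlonglongrightarrow> 0"
  shows "(\<lambda>n. \<integral>\<omega>. S n \<omega> * V \<omega> \<partial>P) \<longlonglongrightarrow> (\<integral>\<omega>. Y \<omega> * V \<omega> \<partial>P)"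
proof -
  interpret prob_space P by fact
  have [measurable]: "Y \<in> borel_measurable P" "V \<in> borel_measurable P" "S n \<in> borel_measurable P" for n
    using Y V S by (auto simp: L2_def)
  have iY: "integrable P (\<lambda>\<omega>. (Y \<omega>)\<^sup>2)" and iV: "integrable P (\<lambda>\<omega>. (V \<omega>)\<^sup>2)"
    and iS: "integrable P (\<lambda>\<omega>. (S n \<omega>)\<^sup>2)" for n
    using Y V S by (auto simp: L2_def)
  have iD: "integrable P (\<lambda>\<omega>. (Y \<omega> - S n \<omega>)\<^sup>2)" for n by (rule integrable_sq_diff) (auto simp: iY iS)
  have iYV: "integrable P (\<lambda>\<omega>. Y \<omega> * V \<omega>)" by (rule integrable_prod_L2) (auto simp: iY iV)
  have iSV: "integrable P (\<lambda>\<omega>. S n \<omega> * V \<omega>)" for n by (rule integrable_prod_L2) (auto simp: iS iV)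
  have iDV: "integrable P (\<lambda>\<omega>. (Y \<omega> - S n \<omega>) * V \<omega>)" for n
    using iYV iSV by (simp add: left_diff_distrib)
  have diff: "(\<integral>\<omega>. Y \<omega> * V \<omega> \<partial>P) - (\<integral>\<omega>. S n \<omega> * V \<omega> \<partial>P) = (\<integral>\<omega>. (Y \<omega> - S n \<omega>) * V \<omega> \<partial>P)" for n
    using iYV iSV by (simp add: left_diff_distrib)
  have bnd: "\<bar>\<integral>\<omega>. (Y \<omega> - S n \<omega>) * V \<omega> \<partial>P\<bar> \<le> (t * (\<integral>\<omega>. (Y \<omega> - S n \<omega>)\<^sup>2 \<partial>P) + (\<integral>\<omega>. (V \<omega>)\<^sup>2 \<partial>P) / t) / 2"
    if t: "t > 0" for t n
  proof -
    have i2: "integrable P (\<lambda>\<omega>. (t * (Y \<omega> - S n \<omega>)\<^sup>2 + (V \<omega>)\<^sup>2 / t) / 2)" using iD iV by simp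
    have "\<bar>\<integral>\<omega>. (Y \<omega> - S n \<omega>) * V \<omega> \<partial>P\<bar> \<le> (\<integral>\<omega>. \<bar>(Y \<omega> - S n \<omega>) * V \<omega>\<bar> \<partial>P)"
      by (rule integral_abs_bound)
    also have "\<dots> \<le> (\<integral>\<omega>. (t * (Y \<omega> - S n \<omega>)\<^sup>2 + (V \<omega>)\<^sup>2 / t) / 2 \<partial>P)"
      by (rule integral_mono[OF _ i2]) (use iDV prod_le_sq_bound[OF t] in auto)
    also have "\<dots> = (t * (\<integral>\<omega>. (Y \<omega> - S n \<omega>)\<^sup>2 \<partial>P) + (\<integral>\<omega>. (V \<omega>)\<^sup>2 \<partial>P) / t) / 2"
      using iD iV by simp
    finally show ?thesis .
  qed
  have "(\<lambda>n. \<integral>\<omega>. (Y \<omega> - S n \<omega>) * V \<omega> \<partial>P) \<longlonglongrightarrow> 0"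
  proof (rule LIMSEQ_I)
    fix e :: real assume e: "0 < e"
    define Q where "Q = (\<integral>\<omega>. (V \<omega>)\<^sup>2 \<partial>P)"
    have Q0: "Q \<ge> 0" unfolding Q_def by (simp add: integral_nonneg_AE)
    define t where "t = (Q + 1) / e"
    have t0: "t > 0" using Q0 e by (simp add: t_def)
    have Qt: "Q / t < e" using Q0 e by (simp add: t_def field_simps)
    from LIMSEQ_D[OF lim, of "e / t"] t0 e obtain n0 where
      n0: "\<And>n. n \<ge> n0 \<Longrightarrow> norm ((\<integral>\<omega>. (Y \<omega> - S n \<omega>)\<^sup>2 \<partial>P) - 0) < e / t" by auto
    show "\<exists>no. \<forall>n\<ge>no. norm ((\<integral>\<omega>. (Y \<omega> - S n \<omega>) * V \<omega> \<partial>P) - 0) < e"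
    proof (intro exI allI impI)
      fix n assume "n0 \<le> n"
      from n0[OF this] have "t * (\<integral>\<omega>. (Y \<omega> - S n \<omega>)\<^sup>2 \<partial>P) < e" using t0 by (simp add: field_simps)
      with bnd[OF t0, of n] Qt show "norm ((\<integral>\<omega>. (Y \<omega> - S n \<omega>) * V \<omega> \<partial>P) - 0) < e"
        unfolding Q_def by simp
    qed
  qed
  hence "(\<lambda>n. (\<integral>\<omega>. Y \<omega> * V \<omega> \<partial>P) - (\<integral>\<omega>. (Y \<omega> - S n \<omega>) * V \<omega> \<partial>P)) \<longlonglongrightarrow> (\<integral>\<omega>. Y \<omega> * V \<omega> \<partial>P) - 0"
    by (intro tendsto_intros)
  moreover have "(\<lambda>n. (\<integral>\<omega>. Y \<omega> * V \<omega> \<partial>P) - (\<integral>\<omega>. (Y \<omega> - S n \<omega>) * V \<omega> \<partial>P)) = (\<lambda>n. \<integral>\<omega>. S n \<omega> * V \<omega> \<partial>P)"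
  proof
    fix n show "(\<integral>\<omega>. Y \<omega> * V \<omega> \<partial>P) - (\<integral>\<omega>. (Y \<omega> - S n \<omega>) * V \<omega> \<partial>P) = (\<integral>\<omega>. S n \<omega> * V \<omega> \<partial>P)"
      using diff[of n] by linarith
  qed
  ultimately show ?thesis by simp
qed

lemma lin_L2:
  fixes N :: "(nat \<Rightarrow> nat) \<Rightarrow> 'w \<Rightarrow> real"
  assumes NL2: "\<And>\<alpha>. \<alpha> \<in> multi_idx \<Longrightarrow> N \<alpha> \<in> L2 P" and fin: "finite I"
    and a: "\<And>i. i \<in> I \<Longrightarrow> a i \<in> multi_idx"
  shows "(\<lambda>\<omega>. \<Sum>i\<in>I. c i * N (a i) \<omega>) \<in> L2 P"
  using fin a
proof (induction I rule: finite_induct)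
  case empty thus ?case by (simp add: L2_def)
next
  case (insert x F)
  have N: "N (a x) \<in> L2 P" using insert NL2 by auto
  have F: "(\<lambda>\<omega>. \<Sum>i\<in>F. c i * N (a i) \<omega>) \<in> L2 P" using insert by auto
  have [measurable]: "N (a x) \<in> borel_measurable P" "(\<lambda>\<omega>. \<Sum>i\<in>F. c i * N (a i) \<omega>) \<in> borel_measurable P"
    using N F by (auto simp: L2_def)
  have "integrable P (\<lambda>\<omega>. (c x * N (a x) \<omega> + (\<Sum>i\<in>F. c i * N (a i) \<omega>))\<^sup>2)"
    by (rule integrable_sq_add) (use N F in \<open>auto simp: L2_def power_mult_distrib\<close>)
  thus ?case using insert by (simp add: L2_def)
qed

lemma bilin:
  fixes N :: "(nat \<Rightarrow> nat) \<Rightarrow> 'w \<Rightarrow> real"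
  assumes NL2: "\<And>\<alpha>. \<alpha> \<in> multi_idx \<Longrightarrow> N \<alpha> \<in> L2 P"
    and North: "\<And>\<alpha> \<beta>. \<alpha> \<in> multi_idx \<Longrightarrow> \<beta> \<in> multi_idx \<Longrightarrow>
          (\<integral>\<omega>. N \<alpha> \<omega> * N \<beta> \<omega> \<partial>P) = (if \<alpha> = \<beta> then mfact \<alpha> else 0)"
    and fI: "finite I" and fJ: "finite J"
    and a: "\<And>i. i \<in> I \<Longrightarrow> a i \<in> multi_idx" and b: "\<And>j. j \<in> J \<Longrightarrow> b j \<in> multi_idx"
  shows "(\<integral>\<omega>. (\<Sum>i\<in>I. c i * N (a i) \<omega>) * (\<Sum>j\<in>J. d j * N (b j) \<omega>) \<partial>P)
       = (\<Sum>i\<in>I. \<Sum>j\<in>J. c i * d j * (if a i = b j then mfact (a i) else 0))"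
proof -
  have int: "integrable P (\<lambda>\<omega>. N (a i) \<omega> * N (b j) \<omega>)" if "i \<in> I" "j \<in> J" for i j
    using NL2[OF a[OF that(1)]] NL2[OF b[OF that(2)]]
    by (intro integrable_prod_L2) (auto simp: L2_def)
  have "(\<lambda>\<omega>. (\<Sum>i\<in>I. c i * N (a i) \<omega>) * (\<Sum>j\<in>J. d j * N (b j) \<omega>))
      = (\<lambda>\<omega>. \<Sum>i\<in>I. \<Sum>j\<in>J. c i * d j * (N (a i) \<omega> * N (b j) \<omega>))"
    by (simp add: sum_product algebra_simps)
  hence "(\<integral>\<omega>. (\<Sum>i\<in>I. c i * N (a i) \<omega>) * (\<Sum>j\<in>J. d j * N (b j) \<omega>) \<partial>P)
      = (\<Sum>i\<in>I. \<Sum>j\<in>J. c i * d j * (\<integral>\<omega>. N (a i) \<omega> * N (b j) \<omega> \<partial>P))"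
    using int by (simp add: Bochner_Integration.integral_sum integrable_sum)
  also have "\<dots> = (\<Sum>i\<in>I. \<Sum>j\<in>J. c i * d j * (if a i = b j then mfact (a i) else 0))"
    by (intro sum.cong refl) (simp add: North a b)
  finally show ?thesis .
qed

lemma add_unit_multi: "\<alpha> \<in> multi_idx \<Longrightarrow> add_unit \<alpha> k \<in> multi_idx"
proof -
  assume a: "\<alpha> \<in> multi_idx"
  have "{j. add_unit \<alpha> k j \<noteq> 0} \<subseteq> insert k {j. \<alpha> j \<noteq> 0}" by (auto simp: add_unit_def)
  moreover have "finite (insert k {j. \<alpha> j \<noteq> 0})" using a by (simp add: multi_idx_def)
  ultimately show ?thesis by (simp add: multi_idx_def finite_subset)
qed

lemma add_unit_inj: "add_unit \<alpha> k = add_unit \<alpha> j \<Longrightarrow> k = j"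
  unfolding add_unit_def by (metis fun_upd_apply n_not_Suc_n Suc_eq_plus1)

lemma mfact_pos: "mfact \<alpha> > 0"
  unfolding mfact_def by (rule prod_pos) auto

lemma mfact_add_unit:
  assumes "\<alpha> \<in> multi_idx" shows "mfact (add_unit \<alpha> k) = mfact \<alpha> * real (\<alpha> k + 1)"
proof -
  have fin: "finite {j. \<alpha> j \<noteq> 0}" using assms by (simp add: multi_idx_def)
  have supp: "{j. add_unit \<alpha> k j \<noteq> 0} = insert k {j. \<alpha> j \<noteq> 0}" by (auto simp: add_unit_def)
  have eq: "(\<Prod>j\<in>{j. \<alpha> j \<noteq> 0} - {k}. fact (add_unit \<alpha> k j)) = (\<Prod>j\<in>{j. \<alpha> j \<noteq> 0} - {k}. (fact (\<alpha> j) :: real))"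
    by (intro prod.cong) (auto simp: add_unit_def)
  have "mfact (add_unit \<alpha> k) = fact (\<alpha> k + 1) * (\<Prod>j\<in>{j. \<alpha> j \<noteq> 0} - {k}. fact (\<alpha> j))"
    unfolding mfact_def supp using fin eq
    by (simp add: prod.insert_remove add_unit_def)
  also have "\<dots> = real (\<alpha> k + 1) * (fact (\<alpha> k) * (\<Prod>j\<in>{j. \<alpha> j \<noteq> 0} - {k}. fact (\<alpha> j)))"
    by (simp add: algebra_simps)
  also have "fact (\<alpha> k) * (\<Prod>j\<in>{j. \<alpha> j \<noteq> 0} - {k}. fact (\<alpha> j)) = mfact \<alpha>"
  proof (cases "\<alpha> k = 0")
    case True thus ?thesis unfolding mfact_def by simp
  next
    case False thus ?thesis unfolding mfact_def using fin by (simp add: prod.remove)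
  qed
  finally show ?thesis by simp
qed

lemma bessel:
  fixes m :: "nat \<Rightarrow> 'u \<Rightarrow> real"
  assumes m_L2: "\<And>k. m k \<in> L2 M"
    and m_orth: "\<And>k j. (\<integral>x. m k x * m j x \<partial>M) = (if k = j then 1 else 0)"
    and f: "f \<in> L2 M"
  shows "(\<Sum>k<n. (\<integral>x. f x * m k x \<partial>M)\<^sup>2) \<le> (\<integral>x. (f x)\<^sup>2 \<partial>M)"
proof -
  define c where "c k = (\<integral>x. f x * m k x \<partial>M)" for k
  have [measurable]: "f \<in> borel_measurable M" "m k \<in> borel_measurable M" for k
    using f m_L2 by (auto simp: L2_def)
  have if2: "integrable M (\<lambda>x. (f x)\<^sup>2)" using f by (simp add: L2_def)
  have ifm: "integrable M (\<lambda>x. f x * m k x)" for k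
    by (rule integrable_prod_L2) (use f m_L2 in \<open>auto simp: L2_def\<close>)
  have imm: "integrable M (\<lambda>x. m k x * m j x)" for k j
    by (rule integrable_prod_L2) (use m_L2 in \<open>auto simp: L2_def\<close>)
  have pw: "(\<lambda>x. (f x - (\<Sum>k<n. c k * m k x))\<^sup>2) = (\<lambda>x. (f x)\<^sup>2 - 2 * (\<Sum>k<n. c k * (f x * m k x))
        + (\<Sum>k<n. \<Sum>j<n. c k * c j * (m k x * m j x)))"
    by (simp add: power2_diff power2_eq_square sum_product sum_distrib_left algebra_simps)
  have i1: "integrable M (\<lambda>x. \<Sum>k<n. c k * (f x * m k x))" using ifm by simp
  have i2: "integrable M (\<lambda>x. \<Sum>k<n. \<Sum>j<n. c k * c j * (m k x * m j x))" using imm by simp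
  have "0 \<le> (\<integral>x. (f x - (\<Sum>k<n. c k * m k x))\<^sup>2 \<partial>M)" by (simp add: integral_nonneg_AE)
  also have "\<dots> = (\<integral>x. (f x)\<^sup>2 \<partial>M) - 2 * (\<Sum>k<n. c k * c k) + (\<Sum>k<n. \<Sum>j<n. c k * c j * (if k = j then 1 else 0))"
    unfolding pw using if2 i1 i2 ifm imm
    by (simp add: Bochner_Integration.integral_sum m_orth c_def[symmetric])
  also have "(\<Sum>k<n. \<Sum>j<n. c k * c j * (if k = j then 1 else 0)) = (\<Sum>k<n. c k * c k)"
    by (simp add: if_distrib cong: if_cong)
  finally show ?thesis by (simp add: c_def power2_eq_square)
qed

theorem proposition8:
  fixes M :: "'u measure" and P :: "'w measure"
    and m :: "nat \<Rightarrow> 'u \<Rightarrow> real"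
    and Nfrak :: "('u \<Rightarrow> real) \<Rightarrow> 'w \<Rightarrow> real"
    and N :: "(nat \<Rightarrow> nat) \<Rightarrow> 'w \<Rightarrow> real"
    and u :: "(nat \<Rightarrow> nat) \<Rightarrow> 'u \<Rightarrow> real"
    and v :: "(nat \<Rightarrow> nat) \<Rightarrow> real"
  assumes M_sf: "sigma_finite_measure M"
    and M_complete: "complete_measure M"
    and m_L2: "\<And>k. m k \<in> L2 M"
    and m_orthonormal: "\<And>k j. (\<integral>x. m k x * m j x \<partial>M) = (if k = j then 1 else 0)"
    and m_complete: "\<And>f. f \<in> L2 M \<Longrightarrow> (\<forall>k. (\<integral>x. f x * m k x \<partial>M) = 0) \<Longrightarrow> AE x in M. f x = 0"
    and P_prob: "prob_space P"
    and Nfrak_L2: "\<And>f. f \<in> L2 M \<Longrightarrow> Nfrak f \<in> L2 P"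
    and Nfrak_linear: "\<And>f g a b. f \<in> L2 M \<Longrightarrow> g \<in> L2 M \<Longrightarrow>
          AE \<omega> in P. Nfrak (\<lambda>x. a * f x + b * g x) \<omega> = a * Nfrak f \<omega> + b * Nfrak g \<omega>"
    and Nfrak_mean_zero: "\<And>f. f \<in> L2 M \<Longrightarrow> (\<integral>\<omega>. Nfrak f \<omega> \<partial>P) = 0"
    and Nfrak_isometry: "\<And>f g. f \<in> L2 M \<Longrightarrow> g \<in> L2 M \<Longrightarrow>
          (\<integral>\<omega>. Nfrak f \<omega> * Nfrak g \<omega> \<partial>P) = (\<integral>x. f x * g x \<partial>M)"
    and N_L2: "\<And>\<alpha>. \<alpha> \<in> multi_idx \<Longrightarrow> N \<alpha> \<in> L2 P"
    and N_orth: "\<And>\<alpha> \<beta>. \<alpha> \<in> multi_idx \<Longrightarrow> \<beta> \<in> multi_idx \<Longrightarrow>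
          (\<integral>\<omega>. N \<alpha> \<omega> * N \<beta> \<omega> \<partial>P) = (if \<alpha> = \<beta> then mfact \<alpha> else 0)"
    and N_zero: "\<And>\<omega>. N (\<lambda>_. 0) \<omega> = 1"
    and N_unit: "\<And>k. N (add_unit (\<lambda>_. 0) k) = Nfrak (m k)"
    and u_L2: "\<And>\<alpha>. \<alpha> \<in> multi_idx \<Longrightarrow> u \<alpha> \<in> L2 M"
    and u_fin: "finite {\<alpha> \<in> multi_idx. u \<alpha> \<noteq> (\<lambda>_. 0)}"
    and v_fin: "finite {\<alpha> \<in> multi_idx. v \<alpha> \<noteq> 0}"
  shows "(\<integral>\<omega>. skorokhod M P m N u \<omega> * chaos_rv N v \<omega> \<partial>P) =
         (\<integral>\<omega>. (\<integral>x. chaos_field N u x \<omega> * malliavin m N v x \<omega> \<partial>M) \<partial>P)"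
proof -
  interpret P: prob_space P by (rule P_prob)
  define A where "A = {\<alpha>. \<alpha> \<in> multi_idx \<and> u \<alpha> \<noteq> (\<lambda>_. 0)}"
  define B where "B = {\<alpha>. \<alpha> \<in> multi_idx \<and> v \<alpha> \<noteq> 0}"
  define Cm where "Cm = {(\<alpha>, k). \<alpha> \<in> multi_idx \<and> v (add_unit \<alpha> k) \<noteq> 0}"
  define c where "c \<alpha> k = (\<integral>x. u \<alpha> x * m k x \<partial>M)" for \<alpha> k
  define S where "S = skorokhod_partial M m N u"
  have fA: "finite A" using u_fin by (simp add: A_def)
  have fB: "finite B" using v_fin by (simp add: B_def)
  have Amulti: "\<alpha> \<in> A \<Longrightarrow> \<alpha> \<in> multi_idx" for \<alpha> by (simp add: A_def)
  have S_eq: "S n = (\<lambda>\<omega>. \<Sum>p\<in>A \<times> {..<n}. c (fst p) (snd p) * N (add_unit (fst p) (snd p)) \<omega>)" for n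
    by (rule ext) (simp add: S_def skorokhod_partial_def A_def c_def sum.cartesian_product')
  have S_L2: "S n \<in> L2 P" for n
    unfolding S_eq by (rule lin_L2[where I="A \<times> {..<n}" and c="\<lambda>p. c (fst p) (snd p)" and a="\<lambda>p. add_unit (fst p) (snd p)", OF N_L2]) (auto simp: fA Amulti add_unit_multi)
  have fCm: "finite Cm"
  proof (rule finite_subset)
    show "Cm \<subseteq> (\<lambda>(\<beta>, k). (\<beta>(k := \<beta> k - 1), k)) ` (SIGMA \<beta>:B. {k. \<beta> k \<noteq> 0})"
    proof
      fix p assume "p \<in> Cm"
      then obtain \<alpha> k where p: "p = (\<alpha>, k)" and a: "\<alpha> \<in> multi_idx" and v: "v (add_unit \<alpha> k) \<noteq> 0"
        by (auto simp: Cm_def)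
      have i1: "(add_unit \<alpha> k, k) \<in> (SIGMA \<beta>:B. {k. \<beta> k \<noteq> 0})"
        using a v add_unit_multi[OF a] by (simp add: B_def add_unit_def)
      have i2: "p = (\<lambda>(\<beta>, k). (\<beta>(k := \<beta> k - 1), k)) (add_unit \<alpha> k, k)"
        by (simp add: p add_unit_def)
      show "p \<in> (\<lambda>(\<beta>, k). (\<beta>(k := \<beta> k - 1), k)) ` (SIGMA \<beta>:B. {k. \<beta> k \<noteq> 0})"
        using i1 i2 by (rule rev_image_eqI)
    qed
    show "finite ((\<lambda>(\<beta>, k). (\<beta>(k := \<beta> k - 1), k)) ` (SIGMA \<beta>:B. {k. \<beta> k \<noteq> 0}))"
      using fB by (intro finite_imageI finite_SigmaI) (auto simp: B_def multi_idx_def)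
  qed
  define K where "K \<alpha> = 1 + (\<Sum>j\<in>{j. \<alpha> j \<noteq> 0}. real (\<alpha> j))" for \<alpha> :: "nat \<Rightarrow> nat"
  have Kb: "real (\<alpha> k + 1) \<le> K \<alpha>" if "\<alpha> \<in> multi_idx" for \<alpha> k
  proof (cases "\<alpha> k = 0")
    case True thus ?thesis by (simp add: K_def sum_nonneg)
  next
    case False
    have "real (\<alpha> k) \<le> (\<Sum>j\<in>{j. \<alpha> j \<noteq> 0}. real (\<alpha> j))"
      by (rule member_le_sum) (use that False in \<open>auto simp: multi_idx_def\<close>)
    thus ?thesis by (simp add: K_def)
  qed
  define W where "W \<alpha> = mfact \<alpha> * K \<alpha>" for \<alpha>
  define T where "T \<alpha> n p \<omega> = (\<Sum>k\<in>{n..<p}. c \<alpha> k * N (add_unit \<alpha> k) \<omega>)" for \<alpha> n p \<omega>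
  have T_int: "(\<integral>\<omega>. (T \<alpha> n p \<omega>)\<^sup>2 \<partial>P) \<le> W \<alpha> * (\<Sum>k\<in>{n..<p}. (c \<alpha> k)\<^sup>2)" if a: "\<alpha> \<in> multi_idx" for \<alpha> n p
  proof -
    have "(\<integral>\<omega>. (T \<alpha> n p \<omega>)\<^sup>2 \<partial>P) = (\<integral>\<omega>. T \<alpha> n p \<omega> * T \<alpha> n p \<omega> \<partial>P)"
      by (simp add: power2_eq_square)
    also have "\<dots> = (\<Sum>k\<in>{n..<p}. \<Sum>j\<in>{n..<p}. c \<alpha> k * c \<alpha> j * (if add_unit \<alpha> k = add_unit \<alpha> j then mfact (add_unit \<alpha> k) else 0))"
      unfolding T_def by (rule bilin[OF N_L2 N_orth]) (auto simp: add_unit_multi a)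
    also have "\<dots> = (\<Sum>k\<in>{n..<p}. (c \<alpha> k)\<^sup>2 * mfact (add_unit \<alpha> k))"
    proof (rule sum.cong[OF refl])
      fix k assume k: "k \<in> {n..<p}"
      have "(\<Sum>j\<in>{n..<p}. c \<alpha> k * c \<alpha> j * (if add_unit \<alpha> k = add_unit \<alpha> j then mfact (add_unit \<alpha> k) else 0))
          = (\<Sum>j\<in>{n..<p}. if j = k then c \<alpha> k * c \<alpha> j * mfact (add_unit \<alpha> k) else 0)"
        by (intro sum.cong refl) (auto dest: add_unit_inj)
      also have "\<dots> = (c \<alpha> k)\<^sup>2 * mfact (add_unit \<alpha> k)" using k by (simp add: power2_eq_square)
      finally show "(\<Sum>j\<in>{n..<p}. c \<alpha> k * c \<alpha> j * (if add_unit \<alpha> k = add_unit \<alpha> j then mfact (add_unit \<alpha> k) else 0))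
          = (c \<alpha> k)\<^sup>2 * mfact (add_unit \<alpha> k)" .
    qed
    also have "\<dots> \<le> (\<Sum>k\<in>{n..<p}. (c \<alpha> k)\<^sup>2 * W \<alpha>)"
    proof (rule sum_mono)
      fix k
      have "mfact (add_unit \<alpha> k) \<le> W \<alpha>"
        unfolding W_def mfact_add_unit[OF a] using Kb[OF a, of k] mfact_pos[of \<alpha>]
        by (intro mult_left_mono) auto
      thus "(c \<alpha> k)\<^sup>2 * mfact (add_unit \<alpha> k) \<le> (c \<alpha> k)\<^sup>2 * W \<alpha>"
        by (intro mult_left_mono) auto
    qed
    finally show ?thesis by (simp add: sum_distrib_left mult.commute)
  qed
  have split: "(\<Sum>k<p. f k) = (\<Sum>k<n. f k) + (\<Sum>k\<in>{n..<p}. f k)" if "n \<le> p" for n p and f :: "nat \<Rightarrow> real"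
    using sum.atLeastLessThan_concat[of 0 n p f] that by (simp add: atLeast0LessThan)
  have Sdiff: "S p \<omega> - S n \<omega> = (\<Sum>\<alpha>\<in>A. T \<alpha> n p \<omega>)" if np: "n \<le> p" for n p \<omega>
    unfolding S_def skorokhod_partial_def A_def[symmetric] T_def c_def[symmetric]
    by (simp add: split[OF np] sum_subtractf[symmetric])
  have T_L2: "(\<lambda>\<omega>. T \<alpha> n p \<omega>) \<in> L2 P" if "\<alpha> \<in> multi_idx" for \<alpha> n p
    unfolding T_def by (rule lin_L2[OF N_L2]) (auto simp: that add_unit_multi)
  define G where "G k = real (card A) * (\<Sum>\<alpha>\<in>A. W \<alpha> * (c \<alpha> k)\<^sup>2)" for k
  have Sbound: "(\<integral>\<omega>. (S p \<omega> - S n \<omega>)\<^sup>2 \<partial>P) \<le> (\<Sum>k\<in>{n..<p}. G k)" if np: "n \<le> p" for n p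
  proof -
    have [measurable]: "S q \<in> borel_measurable P" for q using S_L2 by (simp add: L2_def)
    have iD: "integrable P (\<lambda>\<omega>. (S p \<omega> - S n \<omega>)\<^sup>2)"
      by (rule integrable_sq_diff) (use S_L2 in \<open>auto simp: L2_def\<close>)
    have iT: "integrable P (\<lambda>\<omega>. (T \<alpha> n p \<omega>)\<^sup>2)" if "\<alpha> \<in> A" for \<alpha>
      using T_L2[OF Amulti[OF that]] by (simp add: L2_def)
    have pw: "(S p \<omega> - S n \<omega>)\<^sup>2 \<le> real (card A) * (\<Sum>\<alpha>\<in>A. (T \<alpha> n p \<omega>)\<^sup>2)" for \<omega>
      using Cauchy_Schwarz_ineq_sum[of "\<lambda>\<alpha>. T \<alpha> n p \<omega>" "\<lambda>_. 1" A] unfolding Sdiff[OF np]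
      by (simp add: mult.commute)
    have "(\<integral>\<omega>. (S p \<omega> - S n \<omega>)\<^sup>2 \<partial>P) \<le> (\<integral>\<omega>. real (card A) * (\<Sum>\<alpha>\<in>A. (T \<alpha> n p \<omega>)\<^sup>2) \<partial>P)"
      by (rule integral_mono[OF iD _ pw]) (use iT in simp)
    also have "\<dots> = real (card A) * (\<Sum>\<alpha>\<in>A. \<integral>\<omega>. (T \<alpha> n p \<omega>)\<^sup>2 \<partial>P)"
      using iT by (simp add: Bochner_Integration.integral_sum)
    also have "\<dots> \<le> real (card A) * (\<Sum>\<alpha>\<in>A. W \<alpha> * (\<Sum>k\<in>{n..<p}. (c \<alpha> k)\<^sup>2))"
      by (intro mult_left_mono sum_mono T_int Amulti) auto
    also have "\<dots> = (\<Sum>k\<in>{n..<p}. G k)"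
      unfolding G_def by (simp add: sum_distrib_left sum.swap[of _ A])
    finally show ?thesis .
  qed
  have sc: "summable (\<lambda>k. (c \<alpha> k)\<^sup>2)" if "\<alpha> \<in> A" for \<alpha>
  proof (rule bounded_imp_summable)
    fix n
    show "(\<Sum>k\<le>n. (c \<alpha> k)\<^sup>2) \<le> (\<integral>x. (u \<alpha> x)\<^sup>2 \<partial>M)"
      using bessel[OF m_L2 m_orthonormal u_L2[OF Amulti[OF that]], of "Suc n"]
      by (simp add: c_def lessThan_Suc_atMost)
  qed simp
  have sG: "summable G"
    unfolding G_def by (intro summable_mult summable_sum sc) 
  have Ccrit: "\<exists>N0. \<forall>n\<ge>N0. \<forall>p\<ge>N0. (\<integral>\<omega>. (S p \<omega> - S n \<omega>)\<^sup>2 \<partial>P) < e" if e: "e > 0" for e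
  proof -
    from sG[unfolded summable_Cauchy] e obtain N0 where N0: "\<And>m q. m \<ge> N0 \<Longrightarrow> norm (sum G {m..<q}) < e"
      by blast
    show ?thesis
    proof (intro exI allI impI)
      fix n p assume n: "N0 \<le> n" and p: "N0 \<le> p"
      show "(\<integral>\<omega>. (S p \<omega> - S n \<omega>)\<^sup>2 \<partial>P) < e"
      proof (cases "n \<le> p")
        case True thus ?thesis using Sbound[OF True] N0[OF n, of p] by simp
      next
        case False
        hence "p \<le> n" by simp
        moreover have "(\<lambda>\<omega>. (S p \<omega> - S n \<omega>)\<^sup>2) = (\<lambda>\<omega>. (S n \<omega> - S p \<omega>)\<^sup>2)"
          by (simp add: power2_commute)
        ultimately show ?thesis using Sbound[of p n] N0[OF p, of n] by simp
      qed
    qed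
  qed
  have "\<exists>Y. Y \<in> L2 P \<and> (\<lambda>n. \<integral>\<omega>. (Y \<omega> - S n \<omega>)\<^sup>2 \<partial>P) \<longlonglongrightarrow> 0"
    by (rule L2_cauchy_limit[OF P_prob _ _ Ccrit]) (use S_L2 in \<open>auto simp: L2_def\<close>)
  hence Ysk: "skorokhod M P m N u \<in> L2 P \<and> (\<lambda>n. \<integral>\<omega>. (skorokhod M P m N u \<omega> - S n \<omega>)\<^sup>2 \<partial>P) \<longlonglongrightarrow> 0"
    unfolding skorokhod_def S_def by (rule someI_ex)
  define V where "V = chaos_rv N v"
  have V_eq: "V = (\<lambda>\<omega>. \<Sum>\<beta>\<in>B. v \<beta> * N \<beta> \<omega>)"
    by (rule ext) (simp add: V_def chaos_rv_def B_def)
  have V_L2: "V \<in> L2 P"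
    unfolding V_eq by (rule lin_L2[where I=B and c=v and a="\<lambda>\<beta>. \<beta>", OF N_L2]) (auto simp: v_fin B_def)
  have lim: "(\<lambda>n. \<integral>\<omega>. S n \<omega> * V \<omega> \<partial>P) \<longlonglongrightarrow> (\<integral>\<omega>. skorokhod M P m N u \<omega> * V \<omega> \<partial>P)"
    using Ysk by (intro L2_lim_inner[OF P_prob _ V_L2 S_L2]) auto
  define Cs where "Cs = {p \<in> Cm. fst p \<in> A}"
  have fCs: "finite Cs" using fCm by (simp add: Cs_def)
  have Cm_mem: "p \<in> Cm \<longleftrightarrow> fst p \<in> multi_idx \<and> v (add_unit (fst p) (snd p)) \<noteq> 0" for p
    by (cases p) (simp add: Cm_def)
  define g where "g p = c (fst p) (snd p) * v (add_unit (fst p) (snd p)) * mfact (add_unit (fst p) (snd p))" for p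
  define N0 where "N0 = Suc (Max (insert 0 (snd ` Cm)))"
  have kN0: "snd p < N0" if "p \<in> Cm" for p
  proof -
    have "snd p \<le> Max (insert 0 (snd ` Cm))" using that fCm by (intro Max_ge) auto
    thus ?thesis by (simp add: N0_def)
  qed
  have delta: "(\<Sum>\<beta>\<in>B. X * v \<beta> * (if \<gamma> = \<beta> then Z else 0)) = X * v \<gamma> * Z" if "\<gamma> \<in> multi_idx" for X Z \<gamma>
  proof -
    have "(\<Sum>\<beta>\<in>B. X * v \<beta> * (if \<gamma> = \<beta> then Z else 0)) = (\<Sum>\<beta>\<in>B. if \<beta> = \<gamma> then X * v \<gamma> * Z else 0)"
      by (intro sum.cong) auto
    also have "\<dots> = (if \<gamma> \<in> B then X * v \<gamma> * Z else 0)" using fB by (simp add: sum.delta)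
    also have "\<dots> = X * v \<gamma> * Z" using that by (auto simp: B_def)
    finally show ?thesis .
  qed
  have SV: "(\<integral>\<omega>. S n \<omega> * V \<omega> \<partial>P) = (\<Sum>p\<in>Cs. g p)" if nN: "n \<ge> N0" for n
  proof -
    have "(\<integral>\<omega>. S n \<omega> * V \<omega> \<partial>P) = (\<Sum>p\<in>A \<times> {..<n}. \<Sum>\<beta>\<in>B. c (fst p) (snd p) * v \<beta> *
        (if add_unit (fst p) (snd p) = \<beta> then mfact (add_unit (fst p) (snd p)) else 0))"
      unfolding S_eq V_eq
      by (rule bilin[where a="\<lambda>p. add_unit (fst p) (snd p)" and b="\<lambda>\<beta>. \<beta>", OF N_L2 N_orth])
         (auto simp: fA v_fin Amulti add_unit_multi B_def)
    also have "\<dots> = (\<Sum>p\<in>A \<times> {..<n}. g p)"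
      by (intro sum.cong refl) (auto simp: g_def delta Amulti add_unit_multi)
    also have "\<dots> = (\<Sum>p\<in>Cs. g p)"
    proof (rule sum.mono_neutral_right)
      show "finite (A \<times> {..<n})" using fA by simp
      show "Cs \<subseteq> A \<times> {..<n}"
      proof
        fix p assume p: "p \<in> Cs"
        hence "snd p < n" using kN0[of p] nN by (auto simp: Cs_def)
        with p show "p \<in> A \<times> {..<n}" by (cases p) (auto simp: Cs_def)
      qed
      show "\<forall>p\<in>A \<times> {..<n} - Cs. g p = 0"
        by (auto simp: Cs_def Cm_mem g_def Amulti)
    qed
    finally show ?thesis .
  qed
  have "(\<lambda>n. \<integral>\<omega>. S n \<omega> * V \<omega> \<partial>P) \<longlonglongrightarrow> (\<Sum>p\<in>Cs. g p)"
    by (rule tendsto_eventually) (use SV in \<open>auto intro: eventually_sequentiallyI[of N0]\<close>)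
  with lim have LHS: "(\<integral>\<omega>. skorokhod M P m N u \<omega> * V \<omega> \<partial>P) = (\<Sum>p\<in>Cs. g p)"
    by (rule LIMSEQ_unique)
  define R where "R p = real (fst p (snd p) + 1) * v (add_unit (fst p) (snd p))" for p :: "(nat \<Rightarrow> nat) \<times> nat"
  have Cm_multi: "fst p \<in> multi_idx" if "p \<in> Cm" for p using that Cm_mem by blast
  have [measurable]: "u \<alpha> \<in> borel_measurable M" if "\<alpha> \<in> A" for \<alpha>
    using u_L2[OF Amulti[OF that]] by (simp add: L2_def)
  have ium: "integrable M (\<lambda>x. u \<alpha> x * m k x)" if "\<alpha> \<in> A" for \<alpha> k
    using u_L2[OF Amulti[OF that]] m_L2[of k] by (intro integrable_prod_L2) (auto simp: L2_def)
  have iNN: "integrable P (\<lambda>\<omega>. N \<alpha> \<omega> * N \<beta> \<omega>)" if "\<alpha> \<in> multi_idx" "\<beta> \<in> multi_idx" for \<alpha> \<beta>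
    using N_L2[OF that(1)] N_L2[OF that(2)] by (intro integrable_prod_L2) (auto simp: L2_def)
  have inner: "(\<integral>x. chaos_field N u x \<omega> * malliavin m N v x \<omega> \<partial>M)
      = (\<Sum>\<alpha>\<in>A. \<Sum>p\<in>Cm. c \<alpha> (snd p) * (R p * (N \<alpha> \<omega> * N (fst p) \<omega>)))" for \<omega>
  proof -
    have cf: "chaos_field N u x \<omega> = (\<Sum>\<alpha>\<in>A. u \<alpha> x * N \<alpha> \<omega>)" for x
      by (simp add: chaos_field_def A_def)
    have ml: "malliavin m N v x \<omega> = (\<Sum>p\<in>Cm. R p * m (snd p) x * N (fst p) \<omega>)" for x
      by (simp add: malliavin_def Cm_def[symmetric] R_def split_beta)
    have "(\<lambda>x. chaos_field N u x \<omega> * malliavin m N v x \<omega>)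
        = (\<lambda>x. \<Sum>\<alpha>\<in>A. \<Sum>p\<in>Cm. (u \<alpha> x * m (snd p) x) * (R p * (N \<alpha> \<omega> * N (fst p) \<omega>)))"
      by (rule ext) (simp add: cf ml sum_product algebra_simps)
    hence "(\<integral>x. chaos_field N u x \<omega> * malliavin m N v x \<omega> \<partial>M)
        = (\<Sum>\<alpha>\<in>A. \<Sum>p\<in>Cm. (\<integral>x. u \<alpha> x * m (snd p) x \<partial>M) * (R p * (N \<alpha> \<omega> * N (fst p) \<omega>)))"
      using ium by (simp add: Bochner_Integration.integral_sum integrable_sum)
    thus ?thesis by (simp add: c_def)
  qed
  have "(\<integral>\<omega>. (\<integral>x. chaos_field N u x \<omega> * malliavin m N v x \<omega> \<partial>M) \<partial>P)
      = (\<integral>\<omega>. (\<Sum>\<alpha>\<in>A. \<Sum>p\<in>Cm. c \<alpha> (snd p) * (R p * (N \<alpha> \<omega> * N (fst p) \<omega>))) \<partial>P)"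
    by (simp add: inner)
  also have "\<dots> = (\<Sum>\<alpha>\<in>A. \<Sum>p\<in>Cm. c \<alpha> (snd p) * (R p * (\<integral>\<omega>. N \<alpha> \<omega> * N (fst p) \<omega> \<partial>P)))"
    using iNN Amulti Cm_multi by (simp add: Bochner_Integration.integral_sum integrable_sum)
  also have "\<dots> = (\<Sum>\<alpha>\<in>A. \<Sum>p\<in>Cm. c \<alpha> (snd p) * (R p * (if \<alpha> = fst p then mfact \<alpha> else 0)))"
    by (intro sum.cong refl) (simp add: N_orth Amulti Cm_multi)
  also have "\<dots> = (\<Sum>p\<in>Cm. \<Sum>\<alpha>\<in>A. c \<alpha> (snd p) * (R p * (if \<alpha> = fst p then mfact \<alpha> else 0)))"
    by (rule sum.swap)
  also have "\<dots> = (\<Sum>p\<in>Cm. if fst p \<in> A then c (fst p) (snd p) * (R p * mfact (fst p)) else 0)"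
  proof (intro sum.cong refl)
    fix p
    have "(\<Sum>\<alpha>\<in>A. c \<alpha> (snd p) * (R p * (if \<alpha> = fst p then mfact \<alpha> else 0)))
        = (\<Sum>\<alpha>\<in>A. if \<alpha> = fst p then c (fst p) (snd p) * (R p * mfact (fst p)) else 0)"
      by (intro sum.cong) auto
    also have "\<dots> = (if fst p \<in> A then c (fst p) (snd p) * (R p * mfact (fst p)) else 0)"
      using fA by (simp add: sum.delta)
    finally show "(\<Sum>\<alpha>\<in>A. c \<alpha> (snd p) * (R p * (if \<alpha> = fst p then mfact \<alpha> else 0)))
        = (if fst p \<in> A then c (fst p) (snd p) * (R p * mfact (fst p)) else 0)" .
  qed
  also have "\<dots> = (\<Sum>p\<in>Cs. c (fst p) (snd p) * (R p * mfact (fst p)))"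
    unfolding Cs_def using fCm by (simp add: sum.inter_filter)
  also have "\<dots> = (\<Sum>p\<in>Cs. g p)"
  proof (intro sum.cong refl)
    fix p assume "p \<in> Cs"
    hence "fst p \<in> multi_idx" by (simp add: Cs_def Cm_multi)
    thus "c (fst p) (snd p) * (R p * mfact (fst p)) = g p"
      by (simp add: g_def R_def mfact_add_unit)
  qed
  finally show ?thesis using LHS by (simp add: V_def)
qed

end
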